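(* Let $r\ge 1$ and let $\tau$ be a permutation of $F^r$ with $\tau(\mathbf 0)=\mathbf 0$ such that $SQS_\tau$ is not affine. Then: (1) for any distinct $a,b\in F^r$, the symmetric difference of any two distinct quadruples of $Q_0(a,b)$ belongs to $SQS_\tau$, and the symmetric difference of any two distinct quadruples of $Q_1(a,b)$ belongs to $SQS_\tau$; (2) for any $a,b\in F^r$ there are two distinct quadruples in $Q_\tau(a,b)$ whose symmetric difference does not belong to $SQS_\tau$.
   Context: $F=\mathrm{GF}(2)$, $\mathbf 0$ is the all-zero vector. The point set consists of the $2^{r+1}$ symbols $(\{a\},\emptyset)$ and $(\emptyset,\{a\})$, $a\in F^r$; a pair $(X,Y)$ with $X,Y\subseteq F^r$ denotes the set of points $\{(\{x\},\emptyset):x\in X\}\cup\{(\emptyset,\{y\}):y\in Y\}$, and symmetric differences are taken as sets of points. $SQS_\tau=Q_0\cup Q_1\cup Q_\tau$ where $Q_0=\{(\{a,b,c,d\},\emptyset): a,b,c,d\in F^r \text{ pairwise distinct}, a+b+c+d=\mathbf 0\}$, $Q_1=\{(\emptyset,\{a,b,c,d\}): a,b,c,d\in F^r \text{ pairwise distinct}, a+b+c+d=\mathbf 0\}$, $Q_\tau=\{(\{a,c\},\{b,d\}): a,b,c,d\in F^r, \tau(a+c)=b+d\neq\mathbf 0\}$. (It is a Steiner quadruple system: the set of supports of weight-4 codewords of the code $S_\tau$ below.) For distinct $a,b\in F^r$: $Q_0(a,b)=\{(\{a,b,c,d\},\emptyset): c\ne d,\ a+b+c+d=\mathbf 0\}\cup\{(\{a,b\},\{c,d\}):\tau(a+b)=c+d\neq\mathbf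 0\}$, $Q_1(a,b)=\{(\emptyset,\{a,b,c,d\}): c\ne d,\ a+b+c+d=\mathbf 0\}\cup\{(\{c,d\},\{a,b\}):\tau(c+d)=a+b\neq\mathbf 0\}$, and for any $a,b\in F^r$: $Q_\tau(a,b)=\{(\{a,c\},\{b,d\}): c,d\in F^r,\ \tau(a+c)=b+d\neq\mathbf 0\}$. These are the quadruples of $SQS_\tau$ containing the two points $(\{a\},\emptyset),(\{b\},\emptyset)$; $(\emptyset,\{a\}),(\emptyset,\{b\})$; $(\{a\},\emptyset),(\emptyset,\{b\})$ respectively. A Steiner quadruple system is affine if it is the Steiner quadruple system formed by the supports of the weight-4 codewords of an extended Hamming code (equivalently, isomorphic to the one of the extended Hamming code of the same length). The code $S_\tau$: index coordinates of $F^{2^r}$ by $F^r$, let $e_a$ be the unit vector at position $a$, $\mathcal H=\{x\in F^{2^r}:\sum_{a:x_a=1}a=\mathbf 0,\ \mathrm{wt}(x)\text{ even}\}$, and $S_\tau=\bigcup_{a\in F^r}(\mathcal H+e_a+e_{\mathbf 0})\times(\mathcal H+e_{\tau(a)}+e_{\tau(\mathbf 0)})\subseteq F^{2^{r+1}}$. *)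

theory Defs
  imports Main
begin

text \<open>Vectors of F^r, F = GF(2), are modelled as functions nat \<Rightarrow> bool that
  vanish outside the coordinates 0..r-1; addition is coordinatewise xor.\<close>

type_synonym vec = "nat \<Rightarrow> bool"

definition Vr :: "nat \<Rightarrow> vec set" where
  "Vr r = {x. \<forall>i. r \<le> i \<longrightarrow> \<not> x i}"

definition vzero :: vec where
  "vzero = (\<lambda>_. False)"

definition vadd :: "vec \<Rightarrow> vec \<Rightarrow> vec" (infixl "\<oplus>" 65) where
  "x \<oplus> y = (\<lambda>i. x i \<noteq> y i)"

text \<open>Points: Inl a stands for ({a},{}), Inr a stands for ({},{a}).\<close>

type_synonym point = "vec + vec"

definition pts :: "nat \<Rightarrow> point set" where
  "pts r = Inl ` Vr r \<union> Inr ` Vr r"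

definition symdiff :: "'a set \<Rightarrow> 'a set \<Rightarrow> 'a set" where
  "symdiff A B = (A - B) \<union> (B - A)"

definition distinct4 :: "'a \<Rightarrow> 'a \<Rightarrow> 'a \<Rightarrow> 'a \<Rightarrow> bool" where
  "distinct4 a b c d \<longleftrightarrow> a \<noteq> b \<and> a \<noteq> c \<and> a \<noteq> d \<and> b \<noteq> c \<and> b \<noteq> d \<and> c \<noteq> d"

definition Q0 :: "nat \<Rightarrow> point set set" where
  "Q0 r = {Inl ` {a,b,c,d} | a b c d. a \<in> Vr r \<and> b \<in> Vr r \<and> c \<in> Vr r \<and> d \<in> Vr r
       \<and> distinct4 a b c d \<and> a \<oplus> b \<oplus> c \<oplus> d = vzero}"

definition Q1 :: "nat \<Rightarrow> point set set" where
  "Q1 r = {Inr ` {a,b,c,d} | a b c d. a \<in> Vr r \<and> b \<in> Vr r \<and> c \<in> Vr r \<and> d \<in> Vr r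
       \<and> distinct4 a b c d \<and> a \<oplus> b \<oplus> c \<oplus> d = vzero}"

definition Qtau :: "nat \<Rightarrow> (vec \<Rightarrow> vec) \<Rightarrow> point set set" where
  "Qtau r \<tau> = {Inl ` {a,c} \<union> Inr ` {b,d} | a b c d. a \<in> Vr r \<and> b \<in> Vr r \<and> c \<in> Vr r \<and> d \<in> Vr r
       \<and> \<tau> (a \<oplus> c) = b \<oplus> d \<and> b \<oplus> d \<noteq> vzero}"

definition SQS :: "nat \<Rightarrow> (vec \<Rightarrow> vec) \<Rightarrow> point set set" where
  "SQS r \<tau> = Q0 r \<union> Q1 r \<union> Qtau r \<tau>"

text \<open>Quadruples of SQS_tau through two given points (a,b distinct for Q0ab/Q1ab).\<close>

definition Q0ab :: "nat \<Rightarrow> (vec \<Rightarrow> vec) \<Rightarrow> vec \<Rightarrow> vec \<Rightarrow> point set set" where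
  "Q0ab r \<tau> a b =
     {Inl ` {a,b,c,d} | c d. c \<in> Vr r \<and> d \<in> Vr r \<and> distinct4 a b c d \<and> a \<oplus> b \<oplus> c \<oplus> d = vzero}
   \<union> {Inl ` {a,b} \<union> Inr ` {c,d} | c d. c \<in> Vr r \<and> d \<in> Vr r \<and> \<tau> (a \<oplus> b) = c \<oplus> d \<and> c \<oplus> d \<noteq> vzero}"

definition Q1ab :: "nat \<Rightarrow> (vec \<Rightarrow> vec) \<Rightarrow> vec \<Rightarrow> vec \<Rightarrow> point set set" where
  "Q1ab r \<tau> a b =
     {Inr ` {a,b,c,d} | c d. c \<in> Vr r \<and> d \<in> Vr r \<and> distinct4 a b c d \<and> a \<oplus> b \<oplus> c \<oplus> d = vzero}
   \<union> {Inl ` {c,d} \<union> Inr ` {a,b} | c d. c \<in> Vr r \<and> d \<in> Vr r \<and> \<tau> (c \<oplus> d) = a \<oplus> b \<and> a \<oplus> b \<noteq> vzero}"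

definition Qtauab :: "nat \<Rightarrow> (vec \<Rightarrow> vec) \<Rightarrow> vec \<Rightarrow> vec \<Rightarrow> point set set" where
  "Qtauab r \<tau> a b =
     {Inl ` {a,c} \<union> Inr ` {b,d} | c d. c \<in> Vr r \<and> d \<in> Vr r \<and> \<tau> (a \<oplus> c) = b \<oplus> d \<and> b \<oplus> d \<noteq> vzero}"

text \<open>The SQS of the extended Hamming code of length 2^n, coordinates indexed by F^n.\<close>

definition hamming_sqs :: "nat \<Rightarrow> vec set set" where
  "hamming_sqs n = {{a,b,c,d} | a b c d. a \<in> Vr n \<and> b \<in> Vr n \<and> c \<in> Vr n \<and> d \<in> Vr n
       \<and> distinct4 a b c d \<and> a \<oplus> b \<oplus> c \<oplus> d = vzero}"

definition affine_sqs :: "nat \<Rightarrow> point set set \<Rightarrow> bool" where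
  "affine_sqs r S \<longleftrightarrow> (\<exists>\<phi>. bij_betw \<phi> (pts r) (Vr (Suc r)) \<and> (\<lambda>q. \<phi> ` q) ` S = hamming_sqs (Suc r))"

end

theory Submission
  imports Defs
begin


lemma vx: "x \<oplus> y = y \<oplus> x" "x \<oplus> y \<oplus> z = x \<oplus> (y \<oplus> z)" "x \<oplus> (y \<oplus> z) = y \<oplus> (x \<oplus> z)"
  by (auto simp: vadd_def fun_eq_iff)
lemma vs: "x \<oplus> x = vzero" "x \<oplus> vzero = x" "vzero \<oplus> x = x" "x \<oplus> (x \<oplus> y) = y"
  by (auto simp: vadd_def vzero_def fun_eq_iff)
lemma vadd_eq_zero: "x \<oplus> y = vzero \<longleftrightarrow> x = y"
  by (auto simp: vadd_def vzero_def fun_eq_iff)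
lemma vadd_left_cancel: "x \<oplus> y = x \<oplus> z \<longleftrightarrow> y = z"
  by (auto simp: vadd_def fun_eq_iff)
lemma sum4: "a \<oplus> b \<oplus> c \<oplus> d = vzero \<longleftrightarrow> c \<oplus> d = a \<oplus> b"
  by (auto simp: vadd_def vzero_def fun_eq_iff)
lemma Vr_add: "x \<in> Vr r \<Longrightarrow> y \<in> Vr r \<Longrightarrow> x \<oplus> y \<in> Vr r" by (auto simp: Vr_def vadd_def)
lemma vzero_Vr: "vzero \<in> Vr r" by (simp add: Vr_def vzero_def)

lemma pair_disj: assumes "c \<oplus> d = c' \<oplus> d'" "{c,d} \<noteq> {c',d'}"
  shows "c \<noteq> c'" "c \<noteq> d'" "d \<noteq> c'" "d \<noteq> d'"
  using assms by (metis vx vadd_left_cancel insert_commute)+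

lemma pp0:
  assumes "c \<in> Vr r" "d \<in> Vr r" "c' \<in> Vr r" "d' \<in> Vr r"
    "distinct4 a b c d" "distinct4 a b c' d'" "a \<oplus> b \<oplus> c \<oplus> d = vzero" "a \<oplus> b \<oplus> c' \<oplus> d' = vzero"
    "f ` {a,b,c,d} \<noteq> f ` {a,b,c',d'}" "inj f"
  shows "symdiff (f ` {a,b,c,d}) (f ` {a,b,c',d'}) = f ` {c,d,c',d'} \<and> distinct4 c d c' d' \<and> c \<oplus> d \<oplus> c' \<oplus> d' = vzero"
proof -
  have e: "c \<oplus> d = c' \<oplus> d'" using assms(7,8) by (simp add: sum4)
  have "{c,d} \<noteq> {c',d'}" using assms(9) by auto
  note pd = pair_disj[OF e this]
  have "symdiff (f ` {a,b,c,d}) (f ` {a,b,c',d'}) = f ` {c,d,c',d'}"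
    using pd assms(5,6,10) unfolding symdiff_def distinct4_def inj_def by auto
  moreover have "distinct4 c d c' d'" using pd assms(5,6) by (auto simp: distinct4_def)
  moreover have "c \<oplus> d \<oplus> c' \<oplus> d' = vzero" using e by (simp add: sum4)
  ultimately show ?thesis by blast
qed




lemma in_Q0: "a \<in> Vr r \<Longrightarrow> b \<in> Vr r \<Longrightarrow> c \<in> Vr r \<Longrightarrow> d \<in> Vr r \<Longrightarrow> distinct4 a b c d \<Longrightarrow> a \<oplus> b \<oplus> c \<oplus> d = vzero \<Longrightarrow> Inl ` {a,b,c,d} \<in> SQS r \<tau>"
  unfolding SQS_def Q0_def by blast
lemma in_Q1: "a \<in> Vr r \<Longrightarrow> b \<in> Vr r \<Longrightarrow> c \<in> Vr r \<Longrightarrow> d \<in> Vr r \<Longrightarrow> distinct4 a b c d \<Longrightarrow> a \<oplus> b \<oplus> c \<oplus> d = vzero \<Longrightarrow> Inr ` {a,b,c,d} \<in> SQS r \<tau>"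
  unfolding SQS_def Q1_def by blast
lemma in_Qtau: "a \<in> Vr r \<Longrightarrow> b \<in> Vr r \<Longrightarrow> c \<in> Vr r \<Longrightarrow> d \<in> Vr r \<Longrightarrow> \<tau> (a \<oplus> c) = b \<oplus> d \<Longrightarrow> b \<oplus> d \<noteq> vzero \<Longrightarrow> Inl ` {a,c} \<union> Inr ` {b,d} \<in> SQS r \<tau>"
  unfolding SQS_def Qtau_def by blast

lemma symdiff_commute: "symdiff A B = symdiff B A" by (auto simp: symdiff_def)

lemma mm:
  assumes "c \<oplus> d = c' \<oplus> d'" "c \<oplus> d \<noteq> vzero" "A \<union> f ` {c,d} \<noteq> A \<union> f ` {c',d'}"
    "A \<inter> range f = {}" "inj f"
  shows "symdiff (A \<union> f ` {c,d}) (A \<union> f ` {c',d'}) = f ` {c,d,c',d'} \<and> distinct4 c d c' d' \<and> c \<oplus> d \<oplus> c' \<oplus> d' = vzero"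
proof -
  have "{c,d} \<noteq> {c',d'}" using assms(3) by auto
  note pd = pair_disj[OF assms(1) this]
  have cd: "c \<noteq> d" "c' \<noteq> d'" using assms(1,2) by (metis vadd_eq_zero)+
  have "symdiff (A \<union> f ` {c,d}) (A \<union> f ` {c',d'}) = f ` {c,d,c',d'}"
    using pd cd assms(4,5) unfolding symdiff_def by (auto simp: inj_eq)
  moreover have "distinct4 c d c' d'" using pd cd by (auto simp: distinct4_def)
  moreover have "c \<oplus> d \<oplus> c' \<oplus> d' = vzero" using assms(1) by (simp add: sum4)
  ultimately show ?thesis by blast
qed

lemma part1_Q0:
  assumes tau: "bij_betw \<tau> (Vr r) (Vr r)" "\<tau> vzero = vzero" and ab: "a \<in> Vr r" "b \<in> Vr r" "a \<noteq> b"
    and q: "q1 \<in> Q0ab r \<tau> a b" "q2 \<in> Q0ab r \<tau> a b" "q1 \<noteq> q2"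
  shows "symdiff q1 q2 \<in> SQS r \<tau>"
proof -
  have pm: "symdiff (Inl ` {a,b,c,d}) (Inl ` {a,b} \<union> Inr ` {c',d'}) \<in> SQS r \<tau>"
    if h: "c \<in> Vr r" "d \<in> Vr r" "distinct4 a b c d" "a \<oplus> b \<oplus> c \<oplus> d = vzero"
      "c' \<in> Vr r" "d' \<in> Vr r" "\<tau> (a \<oplus> b) = c' \<oplus> d'" "c' \<oplus> d' \<noteq> vzero" for c d c' d'
  proof -
    have "symdiff (Inl ` {a,b,c,d}) (Inl ` {a,b} \<union> Inr ` {c',d'}) = Inl ` {c,d} \<union> Inr ` {c',d'}"
      using h(3) by (auto simp: symdiff_def distinct4_def)
    moreover have "\<tau> (c \<oplus> d) = c' \<oplus> d'" using h(4,7) by (simp add: sum4)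
    ultimately show ?thesis using h in_Qtau by metis
  qed
  from q(1,2) show ?thesis unfolding Q0ab_def
  proof (elim UnE CollectE exE conjE)
    fix c d c' d'
    assume h: "q1 = Inl ` {a, b, c, d}" "c \<in> Vr r" "d \<in> Vr r" "distinct4 a b c d" "a \<oplus> b \<oplus> c \<oplus> d = vzero"
      "q2 = Inl ` {a, b, c', d'}" "c' \<in> Vr r" "d' \<in> Vr r" "distinct4 a b c' d'" "a \<oplus> b \<oplus> c' \<oplus> d' = vzero"
    have ij: "inj (Inl :: vec \<Rightarrow> point)" by (simp add: inj_def)
    have "q1 \<noteq> q2" by fact
    with pp0[OF h(2,3,7,8,4,9,5,10) _ ij] h(1,6) have
      "symdiff q1 q2 = Inl ` {c,d,c',d'}" "distinct4 c d c' d'" "c \<oplus> d \<oplus> c' \<oplus> d' = vzero" by auto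
    then show ?thesis using in_Q0[OF h(2,3,7,8)] by simp
  next
    fix c d c' d'
    assume h: "q1 = Inl ` {a, b, c, d}" "c \<in> Vr r" "d \<in> Vr r" "distinct4 a b c d" "a \<oplus> b \<oplus> c \<oplus> d = vzero"
      "q2 = Inl ` {a, b} \<union> Inr ` {c', d'}" "c' \<in> Vr r" "d' \<in> Vr r" "\<tau> (a \<oplus> b) = c' \<oplus> d'" "c' \<oplus> d' \<noteq> vzero"
    show ?thesis using pm[OF h(2-5,7-10)] h(1,6) by simp
  next
    fix c d c' d'
    assume h: "q2 = Inl ` {a, b, c, d}" "c \<in> Vr r" "d \<in> Vr r" "distinct4 a b c d" "a \<oplus> b \<oplus> c \<oplus> d = vzero"
      "q1 = Inl ` {a, b} \<union> Inr ` {c', d'}" "c' \<in> Vr r" "d' \<in> Vr r" "\<tau> (a \<oplus> b) = c' \<oplus> d'" "c' \<oplus> d' \<noteq> vzero"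
    show ?thesis using pm[OF h(2-5,7-10)] h(1,6) by (simp add: symdiff_commute)
  next
    fix c d c' d'
    assume h: "q1 = Inl ` {a, b} \<union> Inr ` {c, d}" "c \<in> Vr r" "d \<in> Vr r" "\<tau> (a \<oplus> b) = c \<oplus> d" "c \<oplus> d \<noteq> vzero"
      "q2 = Inl ` {a, b} \<union> Inr ` {c', d'}" "c' \<in> Vr r" "d' \<in> Vr r" "\<tau> (a \<oplus> b) = c' \<oplus> d'" "c' \<oplus> d' \<noteq> vzero"
    have ij: "inj (Inr :: vec \<Rightarrow> point)" by (simp add: inj_def)
    have dj: "Inl ` {a,b} \<inter> range Inr = {}" by auto
    have e: "c \<oplus> d = c' \<oplus> d'" using h(4,9) by simp
    have "q1 \<noteq> q2" by fact
    with mm[of c d c' d' "Inl ` {a,b}" Inr, OF e h(5) _ dj ij] h(1,6) have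
      "symdiff q1 q2 = Inr ` {c,d,c',d'}" "distinct4 c d c' d'" "c \<oplus> d \<oplus> c' \<oplus> d' = vzero" by auto
    then show ?thesis using in_Q1[OF h(2,3,7,8)] by simp
  qed
qed

lemma part1_Q1:
  assumes tau: "bij_betw \<tau> (Vr r) (Vr r)" "\<tau> vzero = vzero" and ab: "a \<in> Vr r" "b \<in> Vr r" "a \<noteq> b"
    and q: "q1 \<in> Q1ab r \<tau> a b" "q2 \<in> Q1ab r \<tau> a b" "q1 \<noteq> q2"
  shows "symdiff q1 q2 \<in> SQS r \<tau>"
proof -
  have inj: "inj_on \<tau> (Vr r)" using tau(1) by (simp add: bij_betw_def)
  have pm: "symdiff (Inr ` {a,b,c,d}) (Inl ` {c',d'} \<union> Inr ` {a,b}) \<in> SQS r \<tau>"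
    if h: "c \<in> Vr r" "d \<in> Vr r" "distinct4 a b c d" "a \<oplus> b \<oplus> c \<oplus> d = vzero"
      "c' \<in> Vr r" "d' \<in> Vr r" "\<tau> (c' \<oplus> d') = a \<oplus> b" "a \<oplus> b \<noteq> vzero" for c d c' d'
  proof -
    have "symdiff (Inr ` {a,b,c,d}) (Inl ` {c',d'} \<union> Inr ` {a,b}) = Inl ` {c',d'} \<union> Inr ` {c,d}"
      using h(3) by (auto simp: symdiff_def distinct4_def)
    moreover have "\<tau> (c' \<oplus> d') = c \<oplus> d" using h(4,7) by (simp add: sum4)
    moreover have "c \<oplus> d \<noteq> vzero" using h(3) by (simp add: vadd_eq_zero distinct4_def)
    ultimately show ?thesis using h in_Qtau by metis
  qed
  from q(1,2) show ?thesis unfolding Q1ab_def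
  proof (elim UnE CollectE exE conjE)
    fix c d c' d'
    assume h: "q1 = Inr ` {a, b, c, d}" "c \<in> Vr r" "d \<in> Vr r" "distinct4 a b c d" "a \<oplus> b \<oplus> c \<oplus> d = vzero"
      "q2 = Inr ` {a, b, c', d'}" "c' \<in> Vr r" "d' \<in> Vr r" "distinct4 a b c' d'" "a \<oplus> b \<oplus> c' \<oplus> d' = vzero"
    have ij: "inj (Inr :: vec \<Rightarrow> point)" by (simp add: inj_def)
    have "q1 \<noteq> q2" by fact
    with pp0[OF h(2,3,7,8,4,9,5,10) _ ij] h(1,6) have
      "symdiff q1 q2 = Inr ` {c,d,c',d'}" "distinct4 c d c' d'" "c \<oplus> d \<oplus> c' \<oplus> d' = vzero" by auto
    then show ?thesis using in_Q1[OF h(2,3,7,8)] by simp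
  next
    fix c d c' d'
    assume h: "q1 = Inr ` {a, b, c, d}" "c \<in> Vr r" "d \<in> Vr r" "distinct4 a b c d" "a \<oplus> b \<oplus> c \<oplus> d = vzero"
      "q2 = Inl ` {c', d'} \<union> Inr ` {a, b}" "c' \<in> Vr r" "d' \<in> Vr r" "\<tau> (c' \<oplus> d') = a \<oplus> b" "a \<oplus> b \<noteq> vzero"
    show ?thesis using pm[OF h(2-5,7-10)] h(1,6) by simp
  next
    fix c d c' d'
    assume h: "q2 = Inr ` {a, b, c, d}" "c \<in> Vr r" "d \<in> Vr r" "distinct4 a b c d" "a \<oplus> b \<oplus> c \<oplus> d = vzero"
      "q1 = Inl ` {c', d'} \<union> Inr ` {a, b}" "c' \<in> Vr r" "d' \<in> Vr r" "\<tau> (c' \<oplus> d') = a \<oplus> b" "a \<oplus> b \<noteq> vzero"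
    show ?thesis using pm[OF h(2-5,7-10)] h(1,6) by (simp add: symdiff_commute)
  next
    fix c d c' d'
    assume h: "q1 = Inl ` {c, d} \<union> Inr ` {a, b}" "c \<in> Vr r" "d \<in> Vr r" "\<tau> (c \<oplus> d) = a \<oplus> b" "a \<oplus> b \<noteq> vzero"
      "q2 = Inl ` {c', d'} \<union> Inr ` {a, b}" "c' \<in> Vr r" "d' \<in> Vr r" "\<tau> (c' \<oplus> d') = a \<oplus> b" "a \<oplus> b \<noteq> vzero"
    have e: "c \<oplus> d = c' \<oplus> d'" using inj h Vr_add by (metis inj_on_def)
    have nz: "c \<oplus> d \<noteq> vzero" using h(4,5) tau(2) by auto
    have ij: "inj (Inl :: vec \<Rightarrow> point)" by (simp add: inj_def)
    have dj: "Inr ` {a,b} \<inter> range Inl = {}" by auto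
    have "q1 \<noteq> q2" by fact
    with mm[of c d c' d' "Inr ` {a,b}" Inl, OF e nz _ dj ij] h(1,6) have
      "symdiff q1 q2 = Inl ` {c,d,c',d'}" "distinct4 c d c' d'" "c \<oplus> d \<oplus> c' \<oplus> d' = vzero" by (auto simp: Un_commute)
    then show ?thesis using in_Q0[OF h(2,3,7,8)] by simp
  qed
qed



definition sig :: "nat \<Rightarrow> (vec \<Rightarrow> vec) \<Rightarrow> vec \<Rightarrow> vec" where
  "sig r \<tau> = the_inv_into (Vr r) \<tau>"

definition phi :: "nat \<Rightarrow> (vec \<Rightarrow> vec) \<Rightarrow> point \<Rightarrow> vec" where
  "phi r \<tau> p = (case p of Inl a \<Rightarrow> a | Inr b \<Rightarrow> (sig r \<tau> b)(r := True))"

lemma Vr_nr: "x \<in> Vr r \<Longrightarrow> \<not> x r" by (simp add: Vr_def)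
lemma Vr_Suc: "x \<in> Vr r \<Longrightarrow> x \<in> Vr (Suc r)" by (simp add: Vr_def)
lemma Vr_SucT: "x \<in> Vr r \<Longrightarrow> x(r := True) \<in> Vr (Suc r)" by (simp add: Vr_def)
lemma Vr_SucF: "v \<in> Vr (Suc r) \<Longrightarrow> \<not> v r \<Longrightarrow> v \<in> Vr r"
  by (auto simp: Vr_def) (metis le_antisym not_less_eq_eq)
lemma Vr_SucF': "v \<in> Vr (Suc r) \<Longrightarrow> v(r := False) \<in> Vr r"
  by (auto simp: Vr_def)
lemma updT_eq: "x \<in> Vr r \<Longrightarrow> y \<in> Vr r \<Longrightarrow> x(r := True) = y(r := True) \<longleftrightarrow> x = y"
  by (auto simp: fun_eq_iff Vr_def)

context
  fixes r \<tau>
  assumes bij: "bij_betw \<tau> (Vr r) (Vr r)" and t0: "\<tau> vzero = vzero"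
    and add: "\<forall>x\<in>Vr r. \<forall>y\<in>Vr r. \<tau> (x \<oplus> y) = \<tau> x \<oplus> \<tau> y"
begin

lemma tinj: "inj_on \<tau> (Vr r)" using bij by (simp add: bij_betw_def)
lemma timg: "\<tau> ` Vr r = Vr r" using bij by (simp add: bij_betw_def)
lemma tVr: "x \<in> Vr r \<Longrightarrow> \<tau> x \<in> Vr r" using timg by auto
lemma sVr: "y \<in> Vr r \<Longrightarrow> sig r \<tau> y \<in> Vr r"
  unfolding sig_def using the_inv_into_into[OF tinj] timg by auto
lemma ts: "y \<in> Vr r \<Longrightarrow> \<tau> (sig r \<tau> y) = y"
  unfolding sig_def using f_the_inv_into_f[OF tinj] timg by auto
lemma st: "x \<in> Vr r \<Longrightarrow> sig r \<tau> (\<tau> x) = x"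
  unfolding sig_def using the_inv_into_f_f[OF tinj] by auto
lemma teq: "x \<in> Vr r \<Longrightarrow> y \<in> Vr r \<Longrightarrow> \<tau> x = \<tau> y \<longleftrightarrow> x = y"
  using tinj by (auto simp: inj_on_def)
lemma seq: "x \<in> Vr r \<Longrightarrow> y \<in> Vr r \<Longrightarrow> sig r \<tau> x = sig r \<tau> y \<longleftrightarrow> x = y"
  by (metis ts)
lemma sadd: "x \<in> Vr r \<Longrightarrow> y \<in> Vr r \<Longrightarrow> sig r \<tau> (x \<oplus> y) = sig r \<tau> x \<oplus> sig r \<tau> y"
proof -
  assume a: "x \<in> Vr r" "y \<in> Vr r"
  have "\<tau> (sig r \<tau> x \<oplus> sig r \<tau> y) = x \<oplus> y" using add a sVr ts by simp
  then show ?thesis by (metis a sVr st Vr_add)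
qed
lemma s0: "sig r \<tau> vzero = vzero" using st[OF vzero_Vr] t0 by simp

lemma phi_Inl: "phi r \<tau> (Inl a) = a" by (simp add: phi_def)
lemma phi_Inr: "phi r \<tau> (Inr b) = (sig r \<tau> b)(r := True)" by (simp add: phi_def)

lemma phi_bij: "bij_betw (phi r \<tau>) (pts r) (Vr (Suc r))"
  unfolding bij_betw_def
proof
  show "inj_on (phi r \<tau>) (pts r)"
    unfolding inj_on_def pts_def
    by (auto simp: phi_Inl phi_Inr updT_eq sVr seq dest: Vr_nr)
  show "phi r \<tau> ` pts r = Vr (Suc r)"
  proof
    show "phi r \<tau> ` pts r \<subseteq> Vr (Suc r)"
      unfolding pts_def by (auto simp: phi_Inl phi_Inr Vr_Suc Vr_SucT sVr)
    show "Vr (Suc r) \<subseteq> phi r \<tau> ` pts r"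
    proof
      fix v assume v: "v \<in> Vr (Suc r)"
      show "v \<in> phi r \<tau> ` pts r"
      proof (cases "v r")
        case False
        then have "v \<in> Vr r" using v Vr_SucF by blast
        then show ?thesis unfolding pts_def by (metis UnI1 image_eqI phi_Inl)
      next
        case True
        have v': "v(r := False) \<in> Vr r" using v Vr_SucF' by blast
        have "phi r \<tau> (Inr (\<tau> (v(r := False)))) = v"
          using True by (simp add: phi_Inr st v' fun_eq_iff)
        moreover have "Inr (\<tau> (v(r := False))) \<in> pts r" unfolding pts_def using tVr v' by blast
        ultimately show ?thesis by (metis image_eqI)
      qed
    qed
  qed
qed


lemma updT4: assumes h: "x \<oplus> y \<oplus> z \<oplus> w = vzero"
  shows "x(r:=True) \<oplus> y(r:=True) \<oplus> z(r:=True) \<oplus> w(r:=True) = vzero"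
proof (rule ext)
  fix i from h have "(x \<oplus> y \<oplus> z \<oplus> w) i = vzero i" by simp
  then show "(x(r:=True) \<oplus> y(r:=True) \<oplus> z(r:=True) \<oplus> w(r:=True)) i = vzero i"
    by (cases "i = r") (simp_all add: vadd_def vzero_def)
qed
lemma updT2: assumes h: "x \<oplus> y \<oplus> z \<oplus> w = vzero" and "\<not> z r" "\<not> w r"
  shows "x \<oplus> y \<oplus> z(r:=True) \<oplus> w(r:=True) = vzero"
proof (rule ext)
  fix i from h have "(x \<oplus> y \<oplus> z \<oplus> w) i = vzero i" by simp
  then show "(x \<oplus> y \<oplus> z(r:=True) \<oplus> w(r:=True)) i = vzero i"
    using assms(2,3) by (cases "i = r") (simp_all add: vadd_def vzero_def)
qed
lemma updF4: assumes h: "x \<oplus> y \<oplus> z \<oplus> w = vzero"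
  shows "x(r:=False) \<oplus> y(r:=False) \<oplus> z(r:=False) \<oplus> w(r:=False) = vzero"
proof (rule ext)
  fix i from h have "(x \<oplus> y \<oplus> z \<oplus> w) i = vzero i" by simp
  then show "(x(r:=False) \<oplus> y(r:=False) \<oplus> z(r:=False) \<oplus> w(r:=False)) i = vzero i"
    by (cases "i = r") (simp_all add: vadd_def vzero_def)
qed
lemma updF2: assumes h: "x \<oplus> y \<oplus> z \<oplus> w = vzero" and "\<not> x r" "\<not> y r"
  shows "x \<oplus> y = z(r:=False) \<oplus> w(r:=False)"
proof (rule ext)
  fix i from h have "(x \<oplus> y \<oplus> z \<oplus> w) i = vzero i" by simp
  then show "(x \<oplus> y) i = (z(r:=False) \<oplus> w(r:=False)) i"
    using assms(2,3) by (cases "i = r") (auto simp add: vadd_def vzero_def)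
qed
lemma phi_back: "v \<in> Vr (Suc r) \<Longrightarrow> v r \<Longrightarrow> phi r \<tau> (Inr (\<tau> (v(r := False)))) = v"
  by (simp add: phi_Inr st Vr_SucF' fun_eq_iff)
lemma updF_eq: assumes "v r" "w r" "v(r := False) = w(r := False)" shows "v = w"
proof (rule ext)
  fix i have "(v(r := False)) i = (w(r := False)) i" using assms(3) by simp
  then show "v i = w i" using assms(1,2) by (cases "i = r") auto
qed
lemma add4: "x \<in> Vr r \<Longrightarrow> y \<in> Vr r \<Longrightarrow> z \<in> Vr r \<Longrightarrow> w \<in> Vr r \<Longrightarrow>
   \<tau> (x \<oplus> y \<oplus> z \<oplus> w) = \<tau> x \<oplus> \<tau> y \<oplus> \<tau> z \<oplus> \<tau> w"
  using add Vr_add by simp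
lemma sadd4: "x \<in> Vr r \<Longrightarrow> y \<in> Vr r \<Longrightarrow> z \<in> Vr r \<Longrightarrow> w \<in> Vr r \<Longrightarrow>
   sig r \<tau> (x \<oplus> y \<oplus> z \<oplus> w) = sig r \<tau> x \<oplus> sig r \<tau> y \<oplus> sig r \<tau> z \<oplus> sig r \<tau> w"
  using sadd Vr_add by simp

lemma in_ham: "a \<in> Vr n \<Longrightarrow> b \<in> Vr n \<Longrightarrow> c \<in> Vr n \<Longrightarrow> d \<in> Vr n \<Longrightarrow> distinct4 a b c d \<Longrightarrow>
   a \<oplus> b \<oplus> c \<oplus> d = vzero \<Longrightarrow> {a,b,c,d} \<in> hamming_sqs n"
  unfolding hamming_sqs_def by blast

lemma fwd: assumes q: "q \<in> SQS r \<tau>" shows "phi r \<tau> ` q \<in> hamming_sqs (Suc r)"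
  using q unfolding SQS_def
proof (elim UnE)
  assume "q \<in> Q0 r"
  then obtain a b c d where h: "q = Inl ` {a,b,c,d}" "a \<in> Vr r" "b \<in> Vr r" "c \<in> Vr r" "d \<in> Vr r"
    "distinct4 a b c d" "a \<oplus> b \<oplus> c \<oplus> d = vzero" unfolding Q0_def by blast
  show ?thesis using h in_ham[of a "Suc r" b c d] by (simp add: phi_Inl Vr_Suc)
next
  assume "q \<in> Q1 r"
  then obtain a b c d where h: "q = Inr ` {a,b,c,d}" "a \<in> Vr r" "b \<in> Vr r" "c \<in> Vr r" "d \<in> Vr r"
    "distinct4 a b c d" "a \<oplus> b \<oplus> c \<oplus> d = vzero" unfolding Q1_def by blast
  let ?s = "sig r \<tau>"
  have "?s a \<oplus> ?s b \<oplus> ?s c \<oplus> ?s d = vzero" using sadd4[OF h(2-5)] h(7) s0 by simp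
  then have sm: "(?s a)(r:=True) \<oplus> (?s b)(r:=True) \<oplus> (?s c)(r:=True) \<oplus> (?s d)(r:=True) = vzero"
    by (rule updT4)
  have ds: "distinct4 ((?s a)(r:=True)) ((?s b)(r:=True)) ((?s c)(r:=True)) ((?s d)(r:=True))"
    using h(6) h(2-5) by (simp add: distinct4_def updT_eq sVr seq)
  show ?thesis using h(1) in_ham[OF Vr_SucT[OF sVr[OF h(2)]] Vr_SucT[OF sVr[OF h(3)]]
      Vr_SucT[OF sVr[OF h(4)]] Vr_SucT[OF sVr[OF h(5)]] ds sm] by (simp add: phi_Inr)
next
  assume "q \<in> Qtau r \<tau>"
  then obtain a b c d where h: "q = Inl ` {a,c} \<union> Inr ` {b,d}" "a \<in> Vr r" "b \<in> Vr r" "c \<in> Vr r" "d \<in> Vr r"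
    "\<tau> (a \<oplus> c) = b \<oplus> d" "b \<oplus> d \<noteq> vzero" unfolding Qtau_def by blast
  let ?s = "sig r \<tau>"
  have "?s b \<oplus> ?s d = a \<oplus> c" using sadd[OF h(3,5)] h(6) st[OF Vr_add[OF h(2,4)]] by simp
  then have "a \<oplus> c \<oplus> ?s b \<oplus> ?s d = vzero" by (simp add: sum4)
  then have sm: "a \<oplus> c \<oplus> (?s b)(r:=True) \<oplus> (?s d)(r:=True) = vzero"
    by (rule updT2) (simp_all add: Vr_nr sVr h)
  have ac: "a \<noteq> c" using h(6,7) t0 vs(1) by auto
  have bd: "b \<noteq> d" using h(7) vs(1) by auto
  have ds: "distinct4 a c ((?s b)(r:=True)) ((?s d)(r:=True))"
    using ac bd h(2-5) Vr_nr[OF h(2)] Vr_nr[OF h(4)]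
    by (auto simp: distinct4_def updT_eq sVr seq)
  show ?thesis using h(1) in_ham[OF Vr_Suc[OF h(2)] Vr_Suc[OF h(4)] Vr_SucT[OF sVr[OF h(3)]]
      Vr_SucT[OF sVr[OF h(5)]] ds sm] by (simp add: phi_Inr phi_Inl insert_commute)
qed


lemma bwdF: assumes v: "a \<in> Vr (Suc r)" "b \<in> Vr (Suc r)" "c \<in> Vr (Suc r)" "d \<in> Vr (Suc r)"
  and dd: "distinct4 a b c d" and sm: "a \<oplus> b \<oplus> c \<oplus> d = vzero"
  and bits: "\<not> a r" "\<not> b r" "\<not> c r" "\<not> d r"
  shows "\<exists>q\<in>SQS r \<tau>. phi r \<tau> ` q = {a,b,c,d}"
proof
  show "Inl ` {a,b,c,d} \<in> SQS r \<tau>"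
    using in_Q0 Vr_SucF v bits dd sm by blast
  show "phi r \<tau> ` Inl ` {a,b,c,d} = {a,b,c,d}" by (simp add: phi_Inl)
qed

lemma bwdT: assumes v: "a \<in> Vr (Suc r)" "b \<in> Vr (Suc r)" "c \<in> Vr (Suc r)" "d \<in> Vr (Suc r)"
  and dd: "distinct4 a b c d" and sm: "a \<oplus> b \<oplus> c \<oplus> d = vzero"
  and bits: "a r" "b r" "c r" "d r"
  shows "\<exists>q\<in>SQS r \<tau>. phi r \<tau> ` q = {a,b,c,d}"
proof
  let ?a = "a(r:=False)" and ?b = "b(r:=False)" and ?c = "c(r:=False)" and ?d = "d(r:=False)"
  have V: "?a \<in> Vr r" "?b \<in> Vr r" "?c \<in> Vr r" "?d \<in> Vr r" using v Vr_SucF' by blast+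
  have "?a \<oplus> ?b \<oplus> ?c \<oplus> ?d = vzero" using sm by (rule updF4)
  then have s2: "\<tau> ?a \<oplus> \<tau> ?b \<oplus> \<tau> ?c \<oplus> \<tau> ?d = vzero" using add4[OF V] t0 by simp
  have d2: "distinct4 (\<tau> ?a) (\<tau> ?b) (\<tau> ?c) (\<tau> ?d)"
    using dd V bits updF_eq unfolding distinct4_def by (metis teq)
  show "Inr ` {\<tau> ?a, \<tau> ?b, \<tau> ?c, \<tau> ?d} \<in> SQS r \<tau>"
    using in_Q1[OF tVr[OF V(1)] tVr[OF V(2)] tVr[OF V(3)] tVr[OF V(4)] d2 s2] .
  show "phi r \<tau> ` Inr ` {\<tau> ?a, \<tau> ?b, \<tau> ?c, \<tau> ?d} = {a,b,c,d}"
    using phi_back v bits by simp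
qed

lemma bwdM: assumes v: "a \<in> Vr (Suc r)" "b \<in> Vr (Suc r)" "c \<in> Vr (Suc r)" "d \<in> Vr (Suc r)"
  and dd: "distinct4 a b c d" and sm: "a \<oplus> b \<oplus> c \<oplus> d = vzero"
  and bits: "\<not> a r" "\<not> b r" "c r" "d r"
  shows "\<exists>q\<in>SQS r \<tau>. phi r \<tau> ` q = {a,b,c,d}"
proof
  let ?c = "c(r:=False)" and ?d = "d(r:=False)"
  have V: "a \<in> Vr r" "b \<in> Vr r" "?c \<in> Vr r" "?d \<in> Vr r" using v Vr_SucF' Vr_SucF bits by blast+
  have "a \<oplus> b = ?c \<oplus> ?d" using sm bits(1,2) by (rule updF2)
  then have s2: "\<tau> (a \<oplus> b) = \<tau> ?c \<oplus> \<tau> ?d" using add V by simp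
  have "\<tau> ?c \<noteq> \<tau> ?d" using dd V bits updF_eq unfolding distinct4_def by (metis teq)
  then have nz: "\<tau> ?c \<oplus> \<tau> ?d \<noteq> vzero" by (simp add: vadd_eq_zero)
  show "Inl ` {a, b} \<union> Inr ` {\<tau> ?c, \<tau> ?d} \<in> SQS r \<tau>"
    using in_Qtau[where \<tau>=\<tau>, OF V(1) tVr[OF V(3)] V(2) tVr[OF V(4)] s2 nz] .
  show "phi r \<tau> ` (Inl ` {a, b} \<union> Inr ` {\<tau> ?c, \<tau> ?d}) = {a,b,c,d}"
    using phi_back v bits by (auto simp: phi_Inl)
qed

lemma bwd: assumes v: "a \<in> Vr (Suc r)" "b \<in> Vr (Suc r)" "c \<in> Vr (Suc r)" "d \<in> Vr (Suc r)"
  and dd: "distinct4 a b c d" and sm: "a \<oplus> b \<oplus> c \<oplus> d = vzero"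
  shows "\<exists>q\<in>SQS r \<tau>. phi r \<tau> ` q = {a,b,c,d}"
proof -
  have "(a \<oplus> b \<oplus> c \<oplus> d) r = vzero r" using sm by simp
  then have par: "(((a r \<noteq> b r) \<noteq> c r) \<noteq> d r) = False" by (simp add: vadd_def vzero_def)
  have P: "distinct4 x y z w \<and> x \<oplus> y \<oplus> z \<oplus> w = vzero"
    if "{x,y,z,w} = {a,b,c,d}" "x \<in> {a,b,c,d}" "distinct4 x y z w" "x \<oplus> y \<oplus> z \<oplus> w = vzero" for x y z w
    using that by blast
  consider "\<not> a r" "\<not> b r" "\<not> c r" "\<not> d r" | "a r" "b r" "c r" "d r"
    | "\<not> a r" "\<not> b r" "c r" "d r" | "\<not> a r" "b r" "\<not> c r" "d r" | "\<not> a r" "b r" "c r" "\<not> d r"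
    | "a r" "\<not> b r" "\<not> c r" "d r" | "a r" "\<not> b r" "c r" "\<not> d r" | "a r" "b r" "\<not> c r" "\<not> d r"
    using par by blast
  then show ?thesis
  proof cases
    case 1 then show ?thesis using bwdF[OF v dd sm] by blast
  next
    case 2 then show ?thesis using bwdT[OF v dd sm] by blast
  next
    case 3 then show ?thesis using bwdM[OF v dd sm] by blast
  next
    case 4
    have "distinct4 a c b d" "a \<oplus> c \<oplus> b \<oplus> d = vzero" using dd sm by (auto simp: distinct4_def vx)
    from bwdM[OF v(1,3,2,4) this 4(1,3,2,4)] show ?thesis by (simp add: insert_commute)
  next
    case 5
    have "distinct4 a d b c" "a \<oplus> d \<oplus> b \<oplus> c = vzero" using dd sm by (auto simp: distinct4_def vx)
    from bwdM[OF v(1,4,2,3) this 5(1,4,2,3)] show ?thesis by (simp add: insert_commute)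
  next
    case 6
    have "distinct4 b c a d" "b \<oplus> c \<oplus> a \<oplus> d = vzero" using dd sm by (auto simp: distinct4_def vx)
    from bwdM[OF v(2,3,1,4) this 6(2,3,1,4)] show ?thesis by (simp add: insert_commute)
  next
    case 7
    have "distinct4 b d a c" "b \<oplus> d \<oplus> a \<oplus> c = vzero" using dd sm by (auto simp: distinct4_def vx)
    from bwdM[OF v(2,4,1,3) this 7(2,4,1,3)] show ?thesis by (simp add: insert_commute)
  next
    case 8
    have "distinct4 c d a b" "c \<oplus> d \<oplus> a \<oplus> b = vzero" using dd sm by (auto simp: distinct4_def vx)
    from bwdM[OF v(3,4,1,2) this 8(3,4,1,2)] show ?thesis by (simp add: insert_commute)
  qed
qed

lemma affine: "affine_sqs r (SQS r \<tau>)"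
  unfolding affine_sqs_def
proof (intro exI conjI)
  show "bij_betw (phi r \<tau>) (pts r) (Vr (Suc r))" by (rule phi_bij)
  show "(\<lambda>q. phi r \<tau> ` q) ` SQS r \<tau> = hamming_sqs (Suc r)"
  proof
    show "(\<lambda>q. phi r \<tau> ` q) ` SQS r \<tau> \<subseteq> hamming_sqs (Suc r)" using fwd by blast
    show "hamming_sqs (Suc r) \<subseteq> (\<lambda>q. phi r \<tau> ` q) ` SQS r \<tau>"
    proof
      fix Q assume "Q \<in> hamming_sqs (Suc r)"
      then obtain a b c d where h: "Q = {a,b,c,d}" "a \<in> Vr (Suc r)" "b \<in> Vr (Suc r)" "c \<in> Vr (Suc r)"
        "d \<in> Vr (Suc r)" "distinct4 a b c d" "a \<oplus> b \<oplus> c \<oplus> d = vzero" unfolding hamming_sqs_def by blast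
      from bwd[OF h(2-7)] h(1) show "Q \<in> (\<lambda>q. phi r \<tau> ` q) ` SQS r \<tau>" by blast
    qed
  qed
qed

end


lemma LR_eq: assumes e: "Inl ` A \<union> Inr ` B = Inl ` A' \<union> Inr ` B'" shows "A = A' \<and> B = B'"
proof
  have "A = {v. Inl v \<in> Inl ` A \<union> Inr ` B}" by auto
  also have "\<dots> = {v. Inl v \<in> Inl ` A' \<union> Inr ` B'}" by (simp only: e)
  also have "\<dots> = A'" by auto
  finally show "A = A'" .
  have "B = {v. Inr v \<in> Inl ` A \<union> Inr ` B}" by auto
  also have "\<dots> = {v. Inr v \<in> Inl ` A' \<union> Inr ` B'}" by (simp only: e)
  also have "\<dots> = B'" by auto
  finally show "B = B'" .
qed
lemma Q0_noInr: "X \<in> Q0 r \<Longrightarrow> Inr v \<notin> X" by (auto simp: Q0_def)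
lemma Q1_noInl: "X \<in> Q1 r \<Longrightarrow> Inl v \<notin> X" by (auto simp: Q1_def)
lemma pair_sum: "{p,q} = {p',q'} \<Longrightarrow> p \<oplus> q = p' \<oplus> q'" by (metis doubleton_eq_iff vx(1))
lemma aa: "(a \<oplus> x) \<oplus> (a \<oplus> y) = x \<oplus> y" by (rule ext) (auto simp: vadd_def)

lemma part2:
  assumes bij: "bij_betw \<tau> (Vr r) (Vr r)" and t0: "\<tau> vzero = vzero"
    and na: "\<not> affine_sqs r (SQS r \<tau>)" and ab: "a \<in> Vr r" "b \<in> Vr r"
  shows "\<exists>q1\<in>Qtauab r \<tau> a b. \<exists>q2\<in>Qtauab r \<tau> a b. q1 \<noteq> q2 \<and> symdiff q1 q2 \<notin> SQS r \<tau>"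
proof (rule ccontr)
  assume H: "\<not> ?thesis"
  have inj: "inj_on \<tau> (Vr r)" and img: "\<tau> ` Vr r = Vr r" using bij by (auto simp: bij_betw_def)
  have tV: "\<tau> x \<in> Vr r" if "x \<in> Vr r" for x using img that by auto
  have tnz: "\<tau> x \<noteq> vzero" if "x \<in> Vr r" "x \<noteq> vzero" for x
    using inj that t0 vzero_Vr by (metis inj_on_def)
  define Q where "Q x = Inl ` {a, a \<oplus> x} \<union> Inr ` {b, b \<oplus> \<tau> x}" for x
  have QI: "Q x \<in> Qtauab r \<tau> a b" if "x \<in> Vr r" "x \<noteq> vzero" for x
  proof -
    have "\<tau> (a \<oplus> (a \<oplus> x)) = b \<oplus> (b \<oplus> \<tau> x)" "b \<oplus> (b \<oplus> \<tau> x) \<noteq> vzero"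
      using tnz[OF that] by (simp_all add: vs)
    moreover have "a \<oplus> x \<in> Vr r" "b \<oplus> \<tau> x \<in> Vr r" using that ab tV Vr_add by auto
    ultimately show ?thesis unfolding Qtauab_def Q_def by blast
  qed
  have addv: "\<forall>x\<in>Vr r. \<forall>y\<in>Vr r. \<tau> (x \<oplus> y) = \<tau> x \<oplus> \<tau> y"
  proof (intro ballI)
    fix x y assume xy: "x \<in> Vr r" "y \<in> Vr r"
    show "\<tau> (x \<oplus> y) = \<tau> x \<oplus> \<tau> y"
    proof (cases "x = vzero \<or> y = vzero \<or> x = y")
      case True then show ?thesis using t0 by (auto simp: vs)
    next
      case False
      then have x0: "x \<noteq> vzero" and y0: "y \<noteq> vzero" and xny: "x \<noteq> y" by auto
      have txy: "\<tau> x \<noteq> \<tau> y" using inj xy xny by (auto simp: inj_on_def)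
      have d1: "a \<oplus> x \<noteq> a" "a \<oplus> y \<noteq> a" "a \<oplus> x \<noteq> a \<oplus> y"
        using x0 y0 xny by (metis vadd_left_cancel vs(2))+
      have d2: "b \<oplus> \<tau> x \<noteq> b" "b \<oplus> \<tau> y \<noteq> b" "b \<oplus> \<tau> x \<noteq> b \<oplus> \<tau> y"
        using tnz[OF xy(1) x0] tnz[OF xy(2) y0] txy by (metis vadd_left_cancel vs(2))+
      have ne: "Q x \<noteq> Q y" using d1 unfolding Q_def by auto
      have sd: "symdiff (Q x) (Q y) = Inl ` {a \<oplus> x, a \<oplus> y} \<union> Inr ` {b \<oplus> \<tau> x, b \<oplus> \<tau> y}"
        using d1 d2 unfolding Q_def symdiff_def by auto
      have "symdiff (Q x) (Q y) \<in> SQS r \<tau>" using H QI[OF xy(1) x0] QI[OF xy(2) y0] ne by blast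
      then have "Inl ` {a \<oplus> x, a \<oplus> y} \<union> Inr ` {b \<oplus> \<tau> x, b \<oplus> \<tau> y} \<in> Qtau r \<tau>"
        unfolding sd SQS_def using Q0_noInr[of _ r "b \<oplus> \<tau> x"] Q1_noInl[of _ r "a \<oplus> x"] by blast
      then obtain a1 b1 c1 d1 where h: "Inl ` {a \<oplus> x, a \<oplus> y} \<union> Inr ` {b \<oplus> \<tau> x, b \<oplus> \<tau> y} = Inl ` {a1,c1} \<union> Inr ` {b1,d1}"
        "\<tau> (a1 \<oplus> c1) = b1 \<oplus> d1" unfolding Qtau_def by blast
      from LR_eq[OF h(1)] have "{a \<oplus> x, a \<oplus> y} = {a1,c1}" "{b \<oplus> \<tau> x, b \<oplus> \<tau> y} = {b1,d1}" by auto
      then have "a1 \<oplus> c1 = x \<oplus> y" "b1 \<oplus> d1 = \<tau> x \<oplus> \<tau> y" by (metis pair_sum aa)+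
      then show ?thesis using h(2) by simp
    qed
  qed
  have "affine_sqs r (SQS r \<tau>)" by (rule affine[OF bij t0 addv])
  with na show False by simp
qed

theorem lemma1:
  fixes r :: nat and \<tau> :: "vec \<Rightarrow> vec"
  assumes "r \<ge> 1"
    and "bij_betw \<tau> (Vr r) (Vr r)"
    and "\<tau> vzero = vzero"
    and "\<not> affine_sqs r (SQS r \<tau>)"
  shows "(\<forall>a\<in>Vr r. \<forall>b\<in>Vr r. a \<noteq> b \<longrightarrow>
            (\<forall>q1\<in>Q0ab r \<tau> a b. \<forall>q2\<in>Q0ab r \<tau> a b. q1 \<noteq> q2 \<longrightarrow> symdiff q1 q2 \<in> SQS r \<tau>) \<and>
            (\<forall>q1\<in>Q1ab r \<tau> a b. \<forall>q2\<in>Q1ab r \<tau> a b. q1 \<noteq> q2 \<longrightarrow> symdiff q1 q2 \<in> SQS r \<tau>))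
       \<and> (\<forall>a\<in>Vr r. \<forall>b\<in>Vr r. \<exists>q1\<in>Qtauab r \<tau> a b. \<exists>q2\<in>Qtauab r \<tau> a b.
            q1 \<noteq> q2 \<and> symdiff q1 q2 \<notin> SQS r \<tau>)"
  apply (intro conjI ballI impI)
    apply (rule part1_Q0[OF assms(2,3)]; assumption)
   apply (rule part1_Q1[OF assms(2,3)]; assumption)
  apply (rule part2[OF assms(2-4)]; assumption)
  done

end
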